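(* Let $p=p_1,\dots,p_m\in(\mathbb R^d)^m$ and $q=q_1,\dots,q_k\in(\mathbb R^d)^k$ with $\mathrm d_{dF}(p,q)\le1$ (with respect to the Euclidean metric). Let $T$ be an optimal traversal of $p$ and $q$ whose traversal graph $G_T$ has at most $k$ connected components, each of which is a star, and let $X_1,\dots,X_l\subseteq\mathbb R^d$ ($l\le k$) be the sets of points $\{p_i: (p\text{-vertex } i)\in K\}\cup\{q_j:(q\text{-vertex } j)\in K\}$ for the connected components $K$ of $G_T$. Let $\delta=4dk$ and let $z$ be uniform in $[0,\delta]$. Then \[ \Pr_z\big[\exists i\in\{1,\dots,l\}\ \exists x,y\in X_i:\ g_{\delta,z}(x)\ne g_{\delta,z}(y)\big]\le\frac12. \]
   Context: For $p\in(\mathbb R^d)^m$ and $q\in(\mathbb R^d)^k$, a traversal is a sequence of index pairs $(i_1,j_1),\dots,(i_t,j_t)$ with $(i_1,j_1)=(1,1)$, $(i_t,j_t)=(m,k)$, and for every $u<t$: $i_{u+1}-i_u\in\{0,1\}$, $j_{u+1}-j_u\in\{0,1\}$ and $(i_{u+1}-i_u)+(j_{u+1}-j_u)\ge1$; its cost is $\max_u\|p_{i_u}-q_{j_u}\|$, and $\mathrm d_{dF}(p,q)$ is the minimum cost over all traversals; a traversal is optimal if its cost equals $\mathrm d_{dF}(p,q)$. The traversal graph $G_T$ is the bipartite graph with vertex set $\{1,\dots,m\}\sqcup\{1,\dots,k\}$ (indices of vertices of $p$ and of $q$) and an edge between $p$-vertex $i$ and $q$-vertex $j$ for every pair $(i,j)\in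 T$. For $\delta>0$, $z\in[0,\delta]$, $g_{\delta,z}(x)=(\lfloor(x_1-z)/\delta\rfloor,\dots,\lfloor(x_d-z)/\delta\rfloor)$ for $x\in\mathbb R^d$. *)

theory Defs
  imports "HOL-Analysis.Analysis"
begin

text \<open>Curves are given as functions nat => real^'d, the vertex p_i being p i for 1 <= i <= m.
  The dimension d is CARD('d). Norm on real^'d is the Euclidean norm.\<close>

definition is_traversal :: "nat \<Rightarrow> nat \<Rightarrow> (nat \<times> nat) list \<Rightarrow> bool" where
  "is_traversal m k T \<longleftrightarrow> T \<noteq> [] \<and> hd T = (1, 1) \<and> last T = (m, k) \<and>
     (\<forall>u. Suc u < length T \<longrightarrow>
        (let (a, b) = T ! u; (c, e) = T ! Suc u in
          (c = a \<or> c = a + 1) \<and> (e = b \<or> e = b + 1) \<and> (c - a) + (e - b) \<ge> 1))"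

definition trav_cost :: "(nat \<Rightarrow> real^'d) \<Rightarrow> (nat \<Rightarrow> real^'d) \<Rightarrow> (nat \<times> nat) list \<Rightarrow> real" where
  "trav_cost p q T = Max ((\<lambda>(i, j). norm (p i - q j)) ` set T)"

definition dFd :: "(nat \<Rightarrow> real^'d) \<Rightarrow> nat \<Rightarrow> (nat \<Rightarrow> real^'d) \<Rightarrow> nat \<Rightarrow> real" where
  "dFd p m q k = Inf (trav_cost p q ` {T. is_traversal m k T})"

definition optimal_traversal ::
  "(nat \<Rightarrow> real^'d) \<Rightarrow> nat \<Rightarrow> (nat \<Rightarrow> real^'d) \<Rightarrow> nat \<Rightarrow> (nat \<times> nat) list \<Rightarrow> bool" where
  "optimal_traversal p m q k T \<longleftrightarrow> is_traversal m k T \<and> trav_cost p q T = dFd p m q k"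

text \<open>Traversal graph: p-vertex i is Inl i, q-vertex j is Inr j.\<close>

definition tg_vertices :: "nat \<Rightarrow> nat \<Rightarrow> (nat + nat) set" where
  "tg_vertices m k = Inl ` {1..m} \<union> Inr ` {1..k}"

definition tg_edge :: "(nat \<times> nat) list \<Rightarrow> nat + nat \<Rightarrow> nat + nat \<Rightarrow> bool" where
  "tg_edge T u v \<longleftrightarrow> (\<exists>(i, j) \<in> set T. (u = Inl i \<and> v = Inr j) \<or> (u = Inr j \<and> v = Inl i))"

definition tg_components :: "nat \<Rightarrow> nat \<Rightarrow> (nat \<times> nat) list \<Rightarrow> (nat + nat) set set" where
  "tg_components m k T = (\<lambda>u. {v \<in> tg_vertices m k. (tg_edge T)\<^sup>*\<^sup>* u v}) ` tg_vertices m k"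

definition is_star_component :: "(nat \<times> nat) list \<Rightarrow> (nat + nat) set \<Rightarrow> bool" where
  "is_star_component T K \<longleftrightarrow> (\<exists>c \<in> K. \<forall>u v. u \<in> K \<longrightarrow> tg_edge T u v \<longrightarrow> u = c \<or> v = c)"

definition vertex_point :: "(nat \<Rightarrow> real^'d) \<Rightarrow> (nat \<Rightarrow> real^'d) \<Rightarrow> nat + nat \<Rightarrow> real^'d" where
  "vertex_point p q v = (case v of Inl i \<Rightarrow> p i | Inr j \<Rightarrow> q j)"

definition grid_map :: "real \<Rightarrow> real \<Rightarrow> real^'d \<Rightarrow> int^'d" where
  "grid_map \<delta> z x = (\<chi> i. \<lfloor>(x $ i - z) / \<delta>\<rfloor>)"

end

theory Submission
  imports Defs
begin

lemma trav_step:
  assumes "is_traversal m k T" "Suc u < length T"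
  shows "fst (T!u) \<le> fst (T!Suc u) \<and> snd (T!u) \<le> snd (T!Suc u)"
proof -
  obtain a b where ab: "T!u = (a,b)" by (cases "T!u")
  obtain c e where ce: "T!Suc u = (c,e)" by (cases "T!Suc u")
  from assms have "(c = a \<or> c = a + 1) \<and> (e = b \<or> e = b + 1)"
    unfolding is_traversal_def using ab ce by (auto simp: Let_def)
  then show ?thesis using ab ce by auto
qed

lemma trav_mono:
  assumes "is_traversal m k T" "u \<le> v" "v < length T"
  shows "fst (T!u) \<le> fst (T!v) \<and> snd (T!u) \<le> snd (T!v)"
  using assms(2,3)
proof (induction v rule: dec_induct)
  case base then show ?case by simp
next
  case (step n)
  then show ?case using trav_step[OF assms(1), of n] by auto
qed

lemma trav_range:
  assumes "is_traversal m k T" "(i,j) \<in> set T"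
  shows "1 \<le> i \<and> i \<le> m \<and> 1 \<le> j \<and> j \<le> k"
proof -
  have ne: "T \<noteq> []" and h: "hd T = (1,1)" and l: "last T = (m,k)"
    using assms(1) unfolding is_traversal_def by auto
  obtain u where u: "u < length T" "T!u = (i,j)" using assms(2) by (metis in_set_conv_nth)
  have "T!0 = (1,1)" using h ne by (simp add: hd_conv_nth)
  moreover have "T!(length T - 1) = (m,k)" using l ne by (simp add: last_conv_nth)
  moreover have "fst (T!0) \<le> fst (T!u) \<and> snd (T!0) \<le> snd (T!u)"
    using trav_mono[OF assms(1), of 0 u] u by auto
  moreover have "fst (T!u) \<le> fst (T!(length T - 1)) \<and> snd (T!u) \<le> snd (T!(length T - 1))"
    using trav_mono[OF assms(1), of u "length T - 1"] u by auto
  ultimately show ?thesis using u by auto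
qed

lemma tg_edge_sym: "tg_edge T x y = tg_edge T y x"
  unfolding tg_edge_def by blast

lemma star_close:
  assumes range: "\<And>i j. (i,j) \<in> set T \<Longrightarrow> 1\<le>i \<and> i\<le>m \<and> 1\<le>j \<and> j\<le>k"
    and K: "K = {v \<in> tg_vertices m k. (tg_edge T)\<^sup>*\<^sup>* u0 v}" and c: "c \<in> K"
    and star: "\<forall>u v. u \<in> K \<longrightarrow> tg_edge T u v \<longrightarrow> u = c \<or> v = c" and v: "v \<in> K"
  shows "v = c \<or> tg_edge T c v"
proof -
  have endp: "y \<in> tg_vertices m k" if "tg_edge T x y" for x y
    using that range unfolding tg_edge_def tg_vertices_def by fastforce
  have symc: "(tg_edge T)\<inverse>\<inverse> = tg_edge T" using tg_edge_sym by (auto intro!: ext)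
  have u0c: "(tg_edge T)\<^sup>*\<^sup>* u0 c" using c K by auto
  have "(tg_edge T)\<^sup>*\<^sup>* c u0"
    using rtranclp_converseI[OF u0c] symc by simp
  then have cv: "(tg_edge T)\<^sup>*\<^sup>* c v" using v K by auto
  show ?thesis using cv
  proof (induction rule: rtranclp_induct)
    case base then show ?case by simp
  next
    case (step w w')
    have "w \<in> tg_vertices m k" using step.IH c K endp by auto
    moreover have "(tg_edge T)\<^sup>*\<^sup>* u0 w" using u0c step.hyps(1) by auto
    ultimately have "w \<in> K" using K by auto
    then have "w = c \<or> w' = c" using star step.hyps(2) by blast
    then show ?case using step.hyps(2) by auto
  qed
qed

lemma sep:
  fixes t a z \<delta> :: real
  assumes d: "\<delta> > 0" and ta: "\<bar>t - a\<bar> \<le> 1"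
    and ne: "\<lfloor>(t - z) / \<delta>\<rfloor> \<noteq> \<lfloor>(a - z) / \<delta>\<rfloor>"
  shows "\<exists>n::int. a - 1 \<le> z + n * \<delta> \<and> z + n * \<delta> \<le> a + 1"
proof (cases "t \<ge> a")
  case True
  let ?N = "\<lfloor>(t - z) / \<delta>\<rfloor>"
  have "(a - z) / \<delta> \<le> (t - z) / \<delta>" using True d by (simp add: divide_right_mono)
  then have "\<lfloor>(a - z) / \<delta>\<rfloor> \<le> ?N" by (rule floor_mono)
  then have "\<lfloor>(a - z) / \<delta>\<rfloor> < ?N" using ne by simp
  then have "(a - z) / \<delta> < ?N" by (simp add: floor_less_iff)
  then have 1: "a - z < ?N * \<delta>" using d by (simp add: divide_less_eq)
  have "?N \<le> (t - z) / \<delta>" by simp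
  then have 2: "?N * \<delta> \<le> t - z" using d by (simp add: le_divide_eq)
  show ?thesis using 1 2 ta by (intro exI[of _ ?N]) auto
next
  case False
  let ?N = "\<lfloor>(a - z) / \<delta>\<rfloor>"
  have "(t - z) / \<delta> \<le> (a - z) / \<delta>" using False d by (simp add: divide_right_mono)
  then have "\<lfloor>(t - z) / \<delta>\<rfloor> \<le> ?N" by (rule floor_mono)
  then have "\<lfloor>(t - z) / \<delta>\<rfloor> < ?N" using ne by simp
  then have "(t - z) / \<delta> < ?N" by (simp add: floor_less_iff)
  then have 1: "t - z < ?N * \<delta>" using d by (simp add: divide_less_eq)
  have "?N \<le> (a - z) / \<delta>" by simp
  then have 2: "?N * \<delta> \<le> a - z" using d by (simp add: le_divide_eq)
  show ?thesis using 1 2 ta False by (intro exI[of _ ?N]) auto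
qed

definition rr :: "real \<Rightarrow> real \<Rightarrow> real" where
  "rr \<delta> a = (a + 1) - \<delta> * \<lfloor>(a + 1) / \<delta>\<rfloor>"

definition Sset :: "real \<Rightarrow> real \<Rightarrow> real set" where
  "Sset \<delta> a = {max 0 (rr \<delta> a - 2)..rr \<delta> a} \<union> {rr \<delta> a + \<delta> - 2..\<delta>}"

lemma rr_bounds: assumes "\<delta> > 0" shows "0 \<le> rr \<delta> a \<and> rr \<delta> a < \<delta>"
proof -
  let ?x = "(a + 1) / \<delta>"
  have "of_int \<lfloor>?x\<rfloor> \<le> ?x" "?x < of_int \<lfloor>?x\<rfloor> + 1" by linarith+
  then have "of_int \<lfloor>?x\<rfloor> * \<delta> \<le> a + 1" "a + 1 < (of_int \<lfloor>?x\<rfloor> + 1) * \<delta>"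
    using assms by (simp_all only: pos_le_divide_eq pos_divide_less_eq)
  then show ?thesis unfolding rr_def by (simp add: algebra_simps)
qed

lemma in_Sset:
  fixes z a \<delta> :: real and n :: int
  assumes d: "\<delta> > 2" and z: "0 \<le> z" "z \<le> \<delta>"
    and h: "a - 1 \<le> z + n * \<delta>" "z + n * \<delta> \<le> a + 1"
  shows "z \<in> Sset \<delta> a"
proof -
  define N where "N = \<lfloor>(a + 1) / \<delta>\<rfloor>"
  define r where "r = rr \<delta> a"
  have rb: "0 \<le> r" "r < \<delta>" using rr_bounds[of \<delta> a] d by (auto simp: r_def)
  have rdef: "r = a + 1 - \<delta> * N" by (simp add: r_def rr_def N_def)
  define j where "j = n - N"
  have e: "r - z = (a + 1 - z - n * \<delta>) + j * \<delta>" unfolding rdef j_def by (simp add: algebra_simps)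
  have lo: "j * \<delta> \<le> r - z" and hi: "r - z \<le> j * \<delta> + 2" using e h by linarith+
  have "j * \<delta> < 1 * \<delta>" using lo rb z by linarith
  then have "real_of_int j < 1" by (rule mult_right_less_imp_less) (use d in simp)
  then have j1: "j \<le> 0" by linarith
  have "-1 * \<delta> < (real_of_int j + 1) * \<delta>" using hi rb z d by (simp add: algebra_simps)
  then have "-1 < real_of_int j + 1" by (rule mult_right_less_imp_less) (use d in simp)
  then have j2: "j \<ge> -1" by linarith
  have "j = 0 \<or> j = -1" using j1 j2 by linarith
  then show ?thesis
  proof
    assume "j = 0" then show ?thesis using lo hi z unfolding Sset_def r_def[symmetric] by auto
  next
    assume "j = -1" then show ?thesis using lo hi z unfolding Sset_def r_def[symmetric] by auto
  qed
qed

lemma Sset_meas: assumes "\<delta> > 0" shows "emeasure lborel (Sset \<delta> a) \<le> 2"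
proof -
  define r where "r = rr \<delta> a"
  have rb: "0 \<le> r" using rr_bounds[OF assms] by (auto simp: r_def)
  have "emeasure lborel (Sset \<delta> a) \<le> emeasure lborel {max 0 (r - 2)..r} + emeasure lborel {r + \<delta> - 2..\<delta>}"
    unfolding Sset_def r_def by (rule emeasure_subadditive) auto
  also have "\<dots> = ennreal (r - max 0 (r - 2)) + ennreal (if r + \<delta> - 2 \<le> \<delta> then \<delta> - (r + \<delta> - 2) else 0)"
    using rb by (simp add: emeasure_lborel_Icc_eq)
  also have "\<dots> = 2"
  proof (cases "r \<ge> 2")
    case True then show ?thesis by auto
  next
    case False
    then have "ennreal (r - max 0 (r - 2)) + ennreal (if r + \<delta> - 2 \<le> \<delta> then \<delta> - (r + \<delta> - 2) else 0)
       = ennreal r + ennreal (2 - r)" by auto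
    also have "\<dots> = ennreal (r + (2 - r))" using rb False by (subst ennreal_plus) auto
    finally show ?thesis by simp
  qed
  finally show ?thesis .
qed

theorem mainTheorem12:
  fixes p q :: "nat \<Rightarrow> real^'d" and m k :: nat and T :: "(nat \<times> nat) list" and \<delta> :: real
  assumes "dFd p m q k \<le> 1"
    and "optimal_traversal p m q k T"
    and "card (tg_components m k T) \<le> k"
    and "\<forall>K \<in> tg_components m k T. is_star_component T K"
    and "\<delta> = 4 * real CARD('d) * real k"
  shows "measure (uniform_measure lborel {0..\<delta>})
           {z. \<exists>K \<in> tg_components m k T. \<exists>x \<in> vertex_point p q ` K. \<exists>y \<in> vertex_point p q ` K.
                 grid_map \<delta> z x \<noteq> grid_map \<delta> z y} \<le> 1 / 2"
proof -
  let ?C = "tg_components m k T"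
  let ?vp = "vertex_point p q"
  let ?Bad = "{z. \<exists>K \<in> tg_components m k T. \<exists>x \<in> vertex_point p q ` K. \<exists>y \<in> vertex_point p q ` K.
                 grid_map \<delta> z x \<noteq> grid_map \<delta> z y}"
  let ?M = "uniform_measure lborel {0..\<delta>}"
  have trav: "is_traversal m k T" using assms(2) unfolding optimal_traversal_def by auto
  have cost: "trav_cost p q T \<le> 1" using assms(1,2) unfolding optimal_traversal_def by auto
  have edge_le: "norm (p i - q j) \<le> 1" if "(i,j) \<in> set T" for i j
  proof -
    have "norm (p i - q j) \<le> trav_cost p q T"
      unfolding trav_cost_def by (rule Max_ge) (use that in force)+
    then show ?thesis using cost by simp
  qed
  have cen_ex: "\<exists>c. c \<in> K \<and> (\<forall>v\<in>K. norm (?vp v - ?vp c) \<le> 1)" if K: "K \<in> ?C" for K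
  proof -
    obtain u0 where u0: "K = {v \<in> tg_vertices m k. (tg_edge T)\<^sup>*\<^sup>* u0 v}"
      using K unfolding tg_components_def by auto
    obtain c where c: "c \<in> K" "\<forall>u v. u \<in> K \<longrightarrow> tg_edge T u v \<longrightarrow> u = c \<or> v = c"
      using assms(4) K unfolding is_star_component_def by auto
    show ?thesis
    proof (intro exI[of _ c] conjI ballI)
      show "c \<in> K" by fact
      fix v assume v: "v \<in> K"
      have "v = c \<or> tg_edge T c v"
        by (rule star_close[OF trav_range[OF trav] u0 c v]) assumption
      then show "norm (?vp v - ?vp c) \<le> 1"
      proof
        assume "tg_edge T c v"
        then obtain i j where ij: "(i,j) \<in> set T" "(c = Inl i \<and> v = Inr j) \<or> (c = Inr j \<and> v = Inl i)"
          unfolding tg_edge_def by auto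
        have e: "norm (p i - q j) \<le> 1" using edge_le[OF ij(1)] .
        from ij(2) show ?thesis
        proof
          assume "c = Inl i \<and> v = Inr j"
          then show ?thesis using e by (simp add: vertex_point_def norm_minus_commute)
        next
          assume "c = Inr j \<and> v = Inl i"
          then show ?thesis using e by (simp add: vertex_point_def)
        qed
      qed simp
    qed
  qed
  then obtain cen where cen: "\<And>K. K \<in> ?C \<Longrightarrow> cen K \<in> K \<and> (\<forall>v\<in>K. norm (?vp v - ?vp (cen K)) \<le> 1)"
    by metis
  have finC: "finite ?C" unfolding tg_components_def tg_vertices_def by simp
  show ?thesis
  proof (cases "k = 0")
    case True
    then have d0: "\<delta> = 0" using assms(5) by simp
    have "emeasure ?M ?Bad \<le> emeasure ?M UNIV" by (rule emeasure_mono) auto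
    also have "\<dots> = emeasure lborel ({0..\<delta>} \<inter> UNIV) / emeasure lborel {0..\<delta>}"
      by (rule emeasure_uniform_measure) auto
    also have "\<dots> = 0" using d0 by simp
    finally have "emeasure ?M ?Bad = 0" by simp
    then show ?thesis by (simp add: measure_def)
  next
    case False
    have dpos: "real CARD('d) \<ge> 1" using finite_UNIV_card_ge_0[where 'a='d] by simp
    have kpos: "real k \<ge> 1" using False by simp
    have d4: "\<delta> \<ge> 4" using assms(5) dpos kpos mult_mono[OF dpos kpos] by simp
    define U where "U = (\<Union>K\<in>?C. \<Union>i\<in>(UNIV::'d set). Sset \<delta> (?vp (cen K) $ i)) \<union> - {0..\<delta>}"
    have sub: "?Bad \<subseteq> U"
    proof
      fix z assume zB: "z \<in> ?Bad"
      show "z \<in> U"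
      proof (cases "z \<in> {0..\<delta>}")
        case False then show ?thesis by (simp add: U_def)
      next
        case True
        obtain K x y where K: "K \<in> ?C" and x: "x \<in> ?vp ` K" and y: "y \<in> ?vp ` K"
          and ne: "grid_map \<delta> z x \<noteq> grid_map \<delta> z y" using zB by auto
        define c where "c = ?vp (cen K)"
        have "\<exists>t\<in> ?vp ` K. grid_map \<delta> z t \<noteq> grid_map \<delta> z c" using ne x y by metis
        then obtain t where t: "t \<in> ?vp ` K" "grid_map \<delta> z t \<noteq> grid_map \<delta> z c" by blast
        then obtain i where i: "\<lfloor>(t$i - z) / \<delta>\<rfloor> \<noteq> \<lfloor>(c$i - z) / \<delta>\<rfloor>"
          unfolding grid_map_def by (auto simp: vec_eq_iff)
        have "norm (t - c) \<le> 1" using cen[OF K] t(1) unfolding c_def by auto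
        moreover have "\<bar>(t - c) $ i\<bar> \<le> norm (t - c)" by (rule component_le_norm_cart)
        ultimately have "\<bar>t$i - c$i\<bar> \<le> 1" by simp
        from sep[OF _ this i] d4 obtain n :: int where "c$i - 1 \<le> z + n * \<delta>" "z + n * \<delta> \<le> c$i + 1"
          by auto
        then have "z \<in> Sset \<delta> (c$i)" using in_Sset[of \<delta> z] d4 True by auto
        then show ?thesis unfolding U_def c_def using K by blast
      qed
    qed
    have Smeas: "Sset \<delta> a \<in> sets lborel" for a unfolding Sset_def by auto
    have U1: "(\<Union>K\<in>?C. \<Union>i\<in>(UNIV::'d set). Sset \<delta> (?vp (cen K) $ i)) \<in> sets lborel"
      using finC Smeas by (intro sets.finite_UN) auto
    have U2: "- {0..\<delta>} \<in> sets lborel"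
      by (simp add: borel_open open_Compl)
    have Umeas: "U \<in> sets lborel" unfolding U_def by (rule sets.Un[OF U1 U2])
    have "emeasure ?M ?Bad \<le> emeasure ?M U" by (rule emeasure_mono[OF sub]) (use Umeas in simp)
    also have "\<dots> = emeasure lborel ({0..\<delta>} \<inter> U) / emeasure lborel {0..\<delta>}"
      by (rule emeasure_uniform_measure) (use Umeas in simp_all)
    also have "\<dots> \<le> ennreal (2 * real (card ?C) * real CARD('d)) / ennreal \<delta>"
    proof -
      have "{0..\<delta>} \<inter> U \<subseteq> (\<Union>K\<in>?C. \<Union>i\<in>(UNIV::'d set). Sset \<delta> (?vp (cen K) $ i))"
        unfolding U_def by auto
      then have "emeasure lborel ({0..\<delta>} \<inter> U) \<le> emeasure lborel (\<Union>K\<in>?C. \<Union>i\<in>(UNIV::'d set). Sset \<delta> (?vp (cen K) $ i))"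
        by (rule emeasure_mono) (use U1 in simp)
      also have "\<dots> \<le> (\<Sum>K\<in>?C. emeasure lborel (\<Union>i\<in>(UNIV::'d set). Sset \<delta> (?vp (cen K) $ i)))"
        by (rule emeasure_subadditive_finite) (use finC Smeas in \<open>auto intro!: sets.finite_UN\<close>)
      also have "\<dots> \<le> (\<Sum>K\<in>?C. \<Sum>i\<in>(UNIV::'d set). emeasure lborel (Sset \<delta> (?vp (cen K) $ i)))"
        by (intro sum_mono emeasure_subadditive_finite) (use Smeas in auto)
      also have "\<dots> \<le> (\<Sum>K\<in>?C. \<Sum>i\<in>(UNIV::'d set). 2)"
        by (intro sum_mono Sset_meas) (use d4 in auto)
      also have "\<dots> = ennreal (2 * real (card ?C) * real CARD('d))"
        by (simp add: ennreal_mult' ennreal_of_nat_eq_real_of_nat mult.commute mult.left_commute)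
      finally have "emeasure lborel ({0..\<delta>} \<inter> U) \<le> ennreal (2 * real (card ?C) * real CARD('d))" .
      moreover have "emeasure lborel {0..\<delta>} = ennreal \<delta>" using d4 by simp
      ultimately show ?thesis by (simp add: divide_right_mono_ennreal)
    qed
    also have "\<dots> = ennreal (2 * real (card ?C) * real CARD('d) / \<delta>)"
      using d4 by (intro divide_ennreal) auto
    also have "\<dots> \<le> ennreal (1 / 2)"
    proof (rule ennreal_leI)
      have "2 * real (card ?C) * real CARD('d) \<le> 2 * real k * real CARD('d)"
        using assms(3) by (simp add: mult_right_mono)
      also have "\<dots> = \<delta> / 2" using assms(5) by simp
      finally show "2 * real (card ?C) * real CARD('d) / \<delta> \<le> 1 / 2"
        using d4 by (simp add: divide_le_eq)
    qed
    finally show ?thesis unfolding measure_def by (intro enn2real_leI) auto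
  qed
qed

end
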